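(* Let $\overline C,\underline C,V,\overline V$ be real numbers with $\overline C>\underline C>0$, $V>0$, $\overline V+V\le\overline C$ and $\underline C<\overline V<\underline C+V$. Let $$\mathcal P_2=\{(x_{t-1},x_t,y_{t-1},y_t)\in\mathbb R_+^2\times\{0,1\}^2:\ -x_i+\underline C y_i\le 0\ (i\in\{t-1,t\}),\ x_i-\overline C y_i\le 0\ (i\in\{t-1,t\}),$$ $$x_t-x_{t-1}\le Vy_{t-1}+\overline V(1-y_{t-1}),\ x_{t-1}-x_t\le Vy_t+\overline V(1-y_t)\},$$ and let $\mathcal Q_2$ be the set of $(x_{t-1},x_t,y_{t-1},y_t)\in\mathbb R^4$ satisfying $y_i\le 1$ and $\underline C y_i\le x_i\le\overline C y_i$ for $i\in\{t-1,t\}$; $x_{t-1}\le\overline V y_{t-1}+(\overline C-\overline V)y_t$; $x_t\le(\overline C-\overline V)y_{t-1}+\overline V y_t$; $x_t-x_{t-1}\le(\underline C+V)y_t-\underline C y_{t-1}$; $x_t-x_{t-1}\le\overline V y_t-(\overline V-V)y_{t-1}$; $x_{t-1}-x_t\le(\underline C+V)y_{t-1}-\underline C y_t$; $x_{t-1}-x_t\le\overline V y_{t-1}-(\overline V-V)y_t$. Then $\mathcal Q_2$ equals the convex hull of $\mathcal P_2$.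
   Context: Here $x_{t-1},x_t,y_{t-1},y_t$ are just the names of four real coordinates (generation amounts and on/off statuses of a generator in two consecutive periods); $\mathbb R_+$ denotes the nonnegative reals. *)

theory Defs
  imports "HOL-Analysis.Analysis"
begin

text \<open>Points are (x_{t-1}, x_t, y_{t-1}, y_t) in real^4, rendered as nested product.\<close>

definition P2 :: "real \<Rightarrow> real \<Rightarrow> real \<Rightarrow> real \<Rightarrow> (real \<times> real \<times> real \<times> real) set" where
  "P2 Cu Cl V Vb = {(x1, x2, y1, y2).
      x1 \<ge> 0 \<and> x2 \<ge> 0 \<and> y1 \<in> {0, 1} \<and> y2 \<in> {0, 1} \<and>
      - x1 + Cl * y1 \<le> 0 \<and> - x2 + Cl * y2 \<le> 0 \<and>
      x1 - Cu * y1 \<le> 0 \<and> x2 - Cu * y2 \<le> 0 \<and>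
      x2 - x1 \<le> V * y1 + Vb * (1 - y1) \<and>
      x1 - x2 \<le> V * y2 + Vb * (1 - y2)}"

definition Q2 :: "real \<Rightarrow> real \<Rightarrow> real \<Rightarrow> real \<Rightarrow> (real \<times> real \<times> real \<times> real) set" where
  "Q2 Cu Cl V Vb = {(x1, x2, y1, y2).
      y1 \<le> 1 \<and> y2 \<le> 1 \<and>
      Cl * y1 \<le> x1 \<and> x1 \<le> Cu * y1 \<and>
      Cl * y2 \<le> x2 \<and> x2 \<le> Cu * y2 \<and>
      x1 \<le> Vb * y1 + (Cu - Vb) * y2 \<and>
      x2 \<le> (Cu - Vb) * y1 + Vb * y2 \<and>
      x2 - x1 \<le> (Cl + V) * y2 - Cl * y1 \<and>
      x2 - x1 \<le> Vb * y2 - (Vb - V) * y1 \<and>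
      x1 - x2 \<le> (Cl + V) * y1 - Cl * y2 \<and>
      x1 - x2 \<le> Vb * y1 - (Vb - V) * y2}"

end

theory Submission
  imports Defs
begin

lemma lin: fixes u v a b c d :: real
  assumes "a \<le> b" "c \<le> d" "u \<ge> 0" "v \<ge> 0"
  shows "u * a + v * c \<le> u * b + v * d"
  using assms by (intro add_mono mult_left_mono) auto

lemma convex_Q2: "convex (Q2 Cu Cl V Vb)"
  unfolding convex_alt Q2_def
proof (clarsimp)
  fix x1 x2 y1 y2 x1' x2' y1' y2' u :: real
  assume h: "y1 \<le> 1" "y2 \<le> 1" "Cl * y1 \<le> x1" "x1 \<le> Cu * y1" "Cl * y2 \<le> x2" "x2 \<le> Cu * y2"
    "x1 \<le> Vb * y1 + (Cu - Vb) * y2" "x2 \<le> (Cu - Vb) * y1 + Vb * y2"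
    "x2 - x1 \<le> (Cl + V) * y2 - Cl * y1" "x2 - x1 \<le> Vb * y2 - (Vb - V) * y1"
    "x1 - x2 \<le> (Cl + V) * y1 - Cl * y2" "x1 - x2 \<le> Vb * y1 - (Vb - V) * y2"
   and h': "y1' \<le> 1" "y2' \<le> 1" "Cl * y1' \<le> x1'" "x1' \<le> Cu * y1'" "Cl * y2' \<le> x2'" "x2' \<le> Cu * y2'"
    "x1' \<le> Vb * y1' + (Cu - Vb) * y2'" "x2' \<le> (Cu - Vb) * y1' + Vb * y2'"
    "x2' - x1' \<le> (Cl + V) * y2' - Cl * y1'" "x2' - x1' \<le> Vb * y2' - (Vb - V) * y1'"
    "x1' - x2' \<le> (Cl + V) * y1' - Cl * y2'" "x1' - x2' \<le> Vb * y1' - (Vb - V) * y2'"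
   and u: "0 \<le> u" "u \<le> 1"
  have v: "0 \<le> 1 - u" using u by simp
  note L = lin[OF _ _ v u(1)]
  show "(1 - u) * y1 + u * y1' \<le> 1 \<and>
       (1 - u) * y2 + u * y2' \<le> 1 \<and>
       Cl * ((1 - u) * y1 + u * y1') \<le> (1 - u) * x1 + u * x1' \<and>
       (1 - u) * x1 + u * x1' \<le> Cu * ((1 - u) * y1 + u * y1') \<and>
       Cl * ((1 - u) * y2 + u * y2') \<le> (1 - u) * x2 + u * x2' \<and>
       (1 - u) * x2 + u * x2' \<le> Cu * ((1 - u) * y2 + u * y2') \<and>
       (1 - u) * x1 + u * x1' \<le> Vb * ((1 - u) * y1 + u * y1') + (Cu - Vb) * ((1 - u) * y2 + u * y2') \<and>
       (1 - u) * x2 + u * x2' \<le> (Cu - Vb) * ((1 - u) * y1 + u * y1') + Vb * ((1 - u) * y2 + u * y2') \<and>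
       (1 - u) * x2 + u * x2' - ((1 - u) * x1 + u * x1') \<le> (Cl + V) * ((1 - u) * y2 + u * y2') - Cl * ((1 - u) * y1 + u * y1') \<and>
       (1 - u) * x2 + u * x2' - ((1 - u) * x1 + u * x1') \<le> Vb * ((1 - u) * y2 + u * y2') - (Vb - V) * ((1 - u) * y1 + u * y1') \<and>
       (1 - u) * x1 + u * x1' - ((1 - u) * x2 + u * x2') \<le> (Cl + V) * ((1 - u) * y1 + u * y1') - Cl * ((1 - u) * y2 + u * y2') \<and>
       (1 - u) * x1 + u * x1' - ((1 - u) * x2 + u * x2') \<le> Vb * ((1 - u) * y1 + u * y1') - (Vb - V) * ((1 - u) * y2 + u * y2')"
    using L[OF h(1) h'(1)] L[OF h(2) h'(2)] L[OF h(3) h'(3)] L[OF h(4) h'(4)] L[OF h(5) h'(5)]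
      L[OF h(6) h'(6)] L[OF h(7) h'(7)] L[OF h(8) h'(8)] L[OF h(9) h'(9)] L[OF h(10) h'(10)]
      L[OF h(11) h'(11)] L[OF h(12) h'(12)]
    by (simp add: algebra_simps)
qed


lemma core:
  fixes Cu Cl V Vb x1 x2 y1 y2 :: real
  assumes "Cu > Cl" and "Cl > 0" and "V > 0" and "Vb + V \<le> Cu"
    and "Cl < Vb" and "Vb < Cl + V" and "y2 \<le> y1"
    and h: "Cl * y1 \<le> x1" "Cl * y2 \<le> x2" "x2 \<le> Cu * y2"
    "x1 \<le> Vb * y1 + (Cu - Vb) * y2"
    "x2 - x1 \<le> (Cl + V) * y2 - Cl * y1"
    "x1 - x2 \<le> Vb * y1 - (Vb - V) * y2"
  shows "\<exists>a b1 b2. Cl \<le> a \<and> a \<le> Vb \<and> Cl \<le> b1 \<and> b1 \<le> Cu \<and> Cl \<le> b2 \<and> b2 \<le> Cu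
     \<and> b1 - b2 \<le> V \<and> b2 - b1 \<le> V \<and> x1 = (y1 - y2) * a + y2 * b1 \<and> x2 = y2 * b2"
proof -
  have y2: "y2 \<ge> 0"
  proof -
    have "(Cu - Cl) * y2 \<ge> 0" using h(2,3) by (simp add: algebra_simps)
    thus ?thesis using assms(1) by (simp add: zero_le_mult_iff)
  qed
  define b2 where "b2 = (if y2 = 0 then Cl else x2 / y2)"
  have b2c: "Cl \<le> b2 \<and> b2 \<le> Cu \<and> y2 * b2 = x2"
  proof (cases "y2 = 0")
    case True
    thus ?thesis using h(2,3) assms(1) by (auto simp: b2_def)
  next
    case False
    hence p: "y2 > 0" using y2 by simp
    show ?thesis using False p h(2,3)
      by (auto simp: b2_def pos_le_divide_eq pos_divide_le_eq mult.commute)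
  qed
  hence b2: "Cl \<le> b2" "b2 \<le> Cu" "y2 * b2 = x2" by auto
  define lo where "lo = max Cl (b2 - V)"
  define hi where "hi = min Cu (b2 + V)"
  have lohi: "lo \<le> hi" "Cl \<le> lo" "hi \<le> Cu" "b2 - V \<le> lo" "hi \<le> b2 + V"
    using b2 assms(1,3) by (auto simp: lo_def hi_def)
  define p where "p = y1 - y2"
  have p: "p \<ge> 0" using assms(7) by (simp add: p_def)
  define L where "L = p * Cl + y2 * lo"
  define U where "U = p * Vb + y2 * hi"
  have Lx: "L \<le> x1"
  proof (cases "lo = Cl")
    case True
    thus ?thesis using h(1) by (simp add: L_def p_def algebra_simps)
  next
    case False
    hence "lo = b2 - V" by (auto simp: lo_def max_def split: if_splits)
    hence "y2 * lo = y2 * b2 - V * y2" by (simp add: right_diff_distrib mult.commute)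
    hence "y2 * lo = x2 - V * y2" using b2(3) by simp
    thus ?thesis using h(5) by (simp add: L_def p_def algebra_simps)
  qed
  have xU: "x1 \<le> U"
  proof (cases "hi = Cu")
    case True
    thus ?thesis using h(4) by (simp add: U_def p_def algebra_simps)
  next
    case False
    hence "hi = b2 + V" by (auto simp: hi_def min_def split: if_splits)
    hence "y2 * hi = y2 * b2 + V * y2" by (simp add: distrib_left mult.commute)
    hence "y2 * hi = x2 + V * y2" using b2(3) by simp
    thus ?thesis using h(6) by (simp add: U_def p_def algebra_simps)
  qed
  define t where "t = (x1 - L) / (U - L)"
  have tc: "0 \<le> t \<and> t \<le> 1 \<and> L + t * (U - L) = x1"
  proof (cases "U = L")
    case True
    thus ?thesis using Lx xU by (auto simp: t_def)
  next
    case False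
    hence "U - L > 0" using Lx xU by simp
    thus ?thesis using Lx xU by (auto simp: t_def divide_simps)
  qed
  hence t: "0 \<le> t" "t \<le> 1" "L + t * (U - L) = x1" by auto
  define a where "a = Cl + t * (Vb - Cl)"
  define b1 where "b1 = lo + t * (hi - lo)"
  have "t * (Vb - Cl) \<le> Vb - Cl" using t assms(5) by (simp add: mult_left_le_one_le)
  moreover have "t * (hi - lo) \<le> hi - lo" using t lohi by (simp add: mult_left_le_one_le)
  moreover have "0 \<le> t * (Vb - Cl)" "0 \<le> t * (hi - lo)" using t lohi assms(5) by simp_all
  moreover have "x1 = p * a + y2 * b1"
    using t(3) by (simp add: a_def b1_def L_def U_def algebra_simps)
  ultimately show ?thesis using lohi b2
    by (intro exI[of _ a] exI[of _ b1] exI[of _ b2]) (auto simp: a_def b1_def p_def)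
qed


lemma P2_sub_Q2:
  fixes Cu Cl V Vb :: real
  assumes "Cu > Cl" and "Cl > 0" and "V > 0" and "Vb + V \<le> Cu"
    and "Cl < Vb" and "Vb < Cl + V"
  shows "P2 Cu Cl V Vb \<subseteq> Q2 Cu Cl V Vb"
  using assms by (auto simp: P2_def Q2_def)

lemma in_hull3:
  assumes "p \<in> S" "q \<in> S" "r \<in> S" "u \<ge> 0" "v \<ge> 0" "w \<ge> 0" "u + v + w = 1"
  shows "u *\<^sub>R p + v *\<^sub>R q + w *\<^sub>R r \<in> convex hull S"
proof -
  have "u *\<^sub>R p + v *\<^sub>R q + w *\<^sub>R r \<in> convex hull {p, q, r}"
    unfolding convex_hull_3 using assms by blast
  moreover have "convex hull {p, q, r} \<subseteq> convex hull S"
    using assms(1-3) by (intro hull_mono) auto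
  ultimately show ?thesis by blast
qed

theorem theorem1:
  fixes Cu Cl V Vb :: real
  assumes "Cu > Cl" and "Cl > 0" and "V > 0" and "Vb + V \<le> Cu"
    and "Cl < Vb" and "Vb < Cl + V"
  shows "Q2 Cu Cl V Vb = convex hull (P2 Cu Cl V Vb)"
proof
  show "convex hull (P2 Cu Cl V Vb) \<subseteq> Q2 Cu Cl V Vb"
    using P2_sub_Q2[OF assms] convex_Q2 by (intro hull_minimal) auto
next
  show "Q2 Cu Cl V Vb \<subseteq> convex hull (P2 Cu Cl V Vb)"
  proof (clarify)
    fix x1 x2 y1 y2
    assume "(x1, x2, y1, y2) \<in> Q2 Cu Cl V Vb"
    hence h: "y1 \<le> 1" "y2 \<le> 1" "Cl * y1 \<le> x1" "x1 \<le> Cu * y1" "Cl * y2 \<le> x2" "x2 \<le> Cu * y2"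
    "x1 \<le> Vb * y1 + (Cu - Vb) * y2" "x2 \<le> (Cu - Vb) * y1 + Vb * y2"
    "x2 - x1 \<le> (Cl + V) * y2 - Cl * y1" "x2 - x1 \<le> Vb * y2 - (Vb - V) * y1"
    "x1 - x2 \<le> (Cl + V) * y1 - Cl * y2" "x1 - x2 \<le> Vb * y1 - (Vb - V) * y2"
      by (auto simp: Q2_def)
    have y1: "y1 \<ge> 0"
    proof -
      have "(Cu - Cl) * y1 \<ge> 0" using h(3,4) by (simp add: algebra_simps)
      thus ?thesis using assms(1) by (simp add: zero_le_mult_iff)
    qed
    have y2: "y2 \<ge> 0"
    proof -
      have "(Cu - Cl) * y2 \<ge> 0" using h(5,6) by (simp add: algebra_simps)
      thus ?thesis using assms(1) by (simp add: zero_le_mult_iff)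
    qed
    have z: "(0::real, 0::real, 0::real, 0::real) \<in> P2 Cu Cl V Vb"
      using assms by (auto simp: P2_def)
    show "(x1, x2, y1, y2) \<in> convex hull (P2 Cu Cl V Vb)"
    proof (cases "y2 \<le> y1")
      case True
      obtain a b1 b2 where ab: "Cl \<le> a" "a \<le> Vb" "Cl \<le> b1" "b1 \<le> Cu" "Cl \<le> b2" "b2 \<le> Cu"
        "b1 - b2 \<le> V" "b2 - b1 \<le> V" "x1 = (y1 - y2) * a + y2 * b1" "x2 = y2 * b2"
        using core[OF assms True h(3,5,6,7,9,12)] by blast
      have pa: "(a, 0, 1, 0) \<in> P2 Cu Cl V Vb" using ab assms by (auto simp: P2_def)
      have pb: "(b1, b2, 1, 1) \<in> P2 Cu Cl V Vb" using ab assms by (auto simp: P2_def)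
      have "(1 - y1) *\<^sub>R (0::real, 0::real, 0::real, 0::real) + (y1 - y2) *\<^sub>R (a, 0, 1, 0)
         + y2 *\<^sub>R (b1, b2, 1, 1) \<in> convex hull (P2 Cu Cl V Vb)"
        using in_hull3[OF z pa pb, of "1 - y1" "y1 - y2" y2] h(1) True y2 by simp
      thus ?thesis using ab by simp
    next
      case False
      hence F: "y1 \<le> y2" by simp
      obtain a b1 b2 where ab: "Cl \<le> a" "a \<le> Vb" "Cl \<le> b1" "b1 \<le> Cu" "Cl \<le> b2" "b2 \<le> Cu"
        "b1 - b2 \<le> V" "b2 - b1 \<le> V" "x2 = (y2 - y1) * a + y1 * b1" "x1 = y1 * b2"
      proof -
        have e1: "x2 \<le> Vb * y2 + (Cu - Vb) * y1" using h(8) by simp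
        show ?thesis using core[OF assms F h(5,3,4) e1 h(11,10)] that by blast
      qed
      have pa: "(0, a, 0, 1) \<in> P2 Cu Cl V Vb" using ab assms by (auto simp: P2_def)
      have pb: "(b2, b1, 1, 1) \<in> P2 Cu Cl V Vb" using ab assms by (auto simp: P2_def)
      have "(1 - y2) *\<^sub>R (0::real, 0::real, 0::real, 0::real) + (y2 - y1) *\<^sub>R (0, a, 0, 1)
         + y1 *\<^sub>R (b2, b1, 1, 1) \<in> convex hull (P2 Cu Cl V Vb)"
        using in_hull3[OF z pa pb, of "1 - y2" "y2 - y1" y1] h(2) F y1 by simp
      thus ?thesis using ab by simp
    qed
  qed
qed

end
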